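(* Let $\tau_i$ be an HC task, let $0\le t_I\le t_E\le t$, and suppose $\tau_i$ switches to HC mode at some time $t_i\in[t_I,t_E]$. Then, as a function of $t_i\in[t_I,t_E]$, $\mathrm{dbf}(\tau_i,t,t_i)$ is maximized when $t_i=t_E$ or $t_i=t_I$; that is, $\mathrm{dbf}(\tau_i,t,t_i)\le\max\{\mathrm{dbf}(\tau_i,t,t_I),\mathrm{dbf}(\tau_i,t,t_E)\}$ for all $t_i\in[t_I,t_E]$.
   Context: $\tau_i=(T_i,HC,\{C_i^L,C_i^H\},D_i)$ is a high-criticality sporadic task with minimum inter-release separation $T_i$, relative deadline $D_i\le T_i$, WCETs $C_i^L<C_i^H$, and tightened deadline $D_i^L\le D_i$. For a time interval $[0,t)$ and mode-switch instant $t_i\le t$, the demand of the job $J_i^A$ (the last job released at or before $t_i$, with release time $r=r(J_i^A)$) is $\mathrm{dbf}(J_i^A,t,t_i)=C_i^L$ if $r+D_i^L<t_i$; $=C_i^H$ if $r+D_i^L\ge t_i$ and $r+D_i\le t$; $=\min\{t_i-r,C_i^L\}$ if $t_i\le r+D_i^L\le t$ and $r+D_i>t$; $=0$ if $r+D_i^L>t$. Define $\mathrm{dbf}_{[b]}(\tau_i,t,t_i)=\lfloor t_i/T_i\rfloor C_i^L+\mathrm{dbf}(J_i^A,t,t_i)$ with $r(J_i^A)=\lfloor t_i/T_i\rfloor T_i$; $\mathrm{dbf}_{[c]}(\tau_i,t,t_i)=b_iC_i^L+\mathrm{dbf}(J_i^A,t,t_i)+a_iC_i^H$, where $s=t-D_i-\lfloor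 (t-D_i)/T_i\rfloor T_i$, $b_i=\lfloor (t_i-s)/T_i\rfloor$, $a_i=\lfloor (t-D_i)/T_i\rfloor-b_i$, and $r(J_i^A)=s+b_iT_i$. Then $\mathrm{dbf}(\tau_i,t,t_i)$ is: $\mathrm{dbf}_{[b]}(\tau_i,t,t_i)$ if $t-t_i<D_i-D_i^L$; $\mathrm{dbf}_{[c]}(\tau_i,t,t_i)$ if $t-t_i\ge D_i$; and $\max\{\mathrm{dbf}_{[b]}(\tau_i,t,t_i),\mathrm{dbf}_{[c]}(\tau_i,t,t_i)\}$ if $D_i-D_i^L\le t-t_i<D_i$. *)

theory Defs
  imports Complex_Main
begin

text \<open>Parameters are passed explicitly:
  T (period), CL, CH (WCETs), D (deadline), DL (tightened deadline).\<close>

definition hc_task :: "real \<Rightarrow> real \<Rightarrow> real \<Rightarrow> real \<Rightarrow> real \<Rightarrow> bool" where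
  "hc_task T CL CH D DL \<longleftrightarrow> 0 < T \<and> 0 < DL \<and> DL \<le> D \<and> D \<le> T \<and> 0 < CL \<and> CL < CH"

text \<open>Demand of job J_i^A with release time r in [0,t) with mode switch at ti.\<close>
definition dbf_job :: "real \<Rightarrow> real \<Rightarrow> real \<Rightarrow> real \<Rightarrow> real \<Rightarrow> real \<Rightarrow> real \<Rightarrow> real" where
  "dbf_job CL CH D DL r t ti =
     (if r + DL < ti then CL
      else if r + D \<le> t then CH
      else if r + DL \<le> t then min (ti - r) CL
      else 0)"

definition dbf_b :: "real \<Rightarrow> real \<Rightarrow> real \<Rightarrow> real \<Rightarrow> real \<Rightarrow> real \<Rightarrow> real \<Rightarrow> real" where
  "dbf_b T CL CH D DL t ti =
     of_int \<lfloor>ti / T\<rfloor> * CL + dbf_job CL CH D DL (of_int \<lfloor>ti / T\<rfloor> * T) t ti"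

definition dbf_c :: "real \<Rightarrow> real \<Rightarrow> real \<Rightarrow> real \<Rightarrow> real \<Rightarrow> real \<Rightarrow> real \<Rightarrow> real" where
  "dbf_c T CL CH D DL t ti =
     (let s = t - D - of_int \<lfloor>(t - D) / T\<rfloor> * T;
          b = \<lfloor>(ti - s) / T\<rfloor>;
          a = \<lfloor>(t - D) / T\<rfloor> - b
      in of_int b * CL + dbf_job CL CH D DL (s + of_int b * T) t ti + of_int a * CH)"

definition dbf :: "real \<Rightarrow> real \<Rightarrow> real \<Rightarrow> real \<Rightarrow> real \<Rightarrow> real \<Rightarrow> real \<Rightarrow> real" where
  "dbf T CL CH D DL t ti =
     (if t - ti < D - DL then dbf_b T CL CH D DL t ti
      else if D \<le> t - ti then dbf_c T CL CH D DL t ti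
      else max (dbf_b T CL CH D DL t ti) (dbf_c T CL CH D DL t ti))"

end

theory Submission
  imports Defs
begin

definition gfun :: "real \<Rightarrow> real \<Rightarrow> real \<Rightarrow> real \<Rightarrow> real \<Rightarrow> real \<Rightarrow> real" where
  "gfun T CL D DL t x = (let k = \<lfloor>x / T\<rfloor> in of_int k * CL +
     (if x > of_int k * T + DL then CL
      else if of_int k * T + D > t \<and> of_int k * T + DL \<le> t then min (x - of_int k * T) CL else 0))"

lemma floor_props:
  fixes x T :: real assumes "0 < T"
  shows "of_int \<lfloor>x / T\<rfloor> * T \<le> x" "x < of_int \<lfloor>x / T\<rfloor> * T + T"
proof -
  have "of_int \<lfloor>x / T\<rfloor> \<le> x / T" by simp
  then show "of_int \<lfloor>x / T\<rfloor> * T \<le> x" using assms by (simp add: le_divide_eq)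
  have "x / T < of_int \<lfloor>x / T\<rfloor> + 1" by linarith
  then show "x < of_int \<lfloor>x / T\<rfloor> * T + T" using assms by (simp add: divide_less_eq algebra_simps)
qed

lemma g_mono:
  assumes "hc_task T CL CH D DL" "x \<le> y"
  shows "gfun T CL D DL t x \<le> gfun T CL D DL t y"
proof -
  have T: "0 < T" "0 < CL" "DL \<le> T" using assms(1) unfolding hc_task_def by auto
  define kx where "kx = \<lfloor>x / T\<rfloor>"
  define ky where "ky = \<lfloor>y / T\<rfloor>"
  have kle: "kx \<le> ky" unfolding kx_def ky_def using T assms(2)
    by (simp add: floor_mono divide_right_mono)
  have fx: "of_int kx * T \<le> x" "x < of_int kx * T + T" using floor_props[OF T(1)] kx_def by auto
  have fy: "of_int ky * T \<le> y" "y < of_int ky * T + T" using floor_props[OF T(1)] ky_def by auto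
  have gx: "gfun T CL D DL t x \<le> of_int kx * CL + CL"
    unfolding gfun_def Let_def kx_def[symmetric] using T by auto
  have gx0: "of_int ky * CL \<le> gfun T CL D DL t y"
    unfolding gfun_def Let_def ky_def[symmetric] using T fy by auto
  show ?thesis
  proof (cases "kx < ky")
    case True
    then have "of_int kx + 1 \<le> (of_int ky :: real)" by linarith
    then have "of_int kx * CL + CL \<le> of_int ky * CL" using T
      by (metis distrib_right mult_1 mult_right_mono less_le_not_le)
    then show ?thesis using gx gx0 by linarith
  next
    case False
    then have e: "kx = ky" using kle by auto
    show ?thesis unfolding gfun_def Let_def kx_def[symmetric] ky_def[symmetric] e
      using assms(2) T fy by (auto simp: min_def)
  qed
qed

lemma b_ge_g:
  assumes "hc_task T CL CH D DL"
  shows "gfun T CL D DL t y \<le> dbf_b T CL CH D DL t y"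
  using assms unfolding hc_task_def gfun_def dbf_b_def dbf_job_def Let_def by auto

lemma b_eq_g_L:
  assumes "hc_task T CL CH D DL" "t - y < D - DL"
  shows "dbf_b T CL CH D DL t y = gfun T CL D DL t y"
  using assms unfolding hc_task_def gfun_def dbf_b_def dbf_job_def Let_def by auto

lemma b_le_M:
  assumes "hc_task T CL CH D DL"
  shows "dbf_b T CL CH D DL t y \<le> max (gfun T CL D DL t y) (of_int \<lfloor>(t - D) / T\<rfloor> * CL + CH)"
proof -
  have T: "0 < T" "0 < CL" using assms(1) unfolding hc_task_def by auto
  define k where "k = \<lfloor>y / T\<rfloor>"
  define n where "n = \<lfloor>(t - D) / T\<rfloor>"
  have "k \<le> n" if "of_int k * T + D \<le> t"
  proof -
    have "of_int k \<le> (t - D) / T" using that T by (simp add: le_divide_eq)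
    then show ?thesis unfolding n_def by (simp add: le_floor_iff)
  qed
  then have "of_int k * T + D \<le> t \<Longrightarrow> of_int k * CL \<le> of_int n * CL" using T by simp
  then show ?thesis unfolding gfun_def dbf_b_def dbf_job_def Let_def k_def[symmetric] n_def[symmetric]
    by auto
qed

lemma c_facts:
  assumes "hc_task T CL CH D DL"
  shows "y < t \<Longrightarrow> D - DL \<le> t - y \<Longrightarrow> t - y < D \<Longrightarrow>
           dbf_c T CL CH D DL t y = of_int \<lfloor>(t - D) / T\<rfloor> * CL + CH"
    and "D \<le> t - x \<Longrightarrow> of_int \<lfloor>(t - D) / T\<rfloor> * CL + CH \<le> dbf_c T CL CH D DL t x"
    and "x \<le> y \<Longrightarrow> D \<le> t - y \<Longrightarrow> dbf_c T CL CH D DL t y \<le> dbf_c T CL CH D DL t x"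
proof -
  have T: "0 < T" "0 < CL" "CL < CH" "DL \<le> D" "D \<le> T" "0 < DL" using assms(1) unfolding hc_task_def by auto
  define n where "n = \<lfloor>(t - D) / T\<rfloor>"
  define s where "s = t - D - of_int n * T"
  have sp: "0 \<le> s" "s < T" using floor_props[OF T(1), of "t - D"] unfolding s_def n_def by auto
  have bfl: "\<lfloor>(z - s) / T\<rfloor> = m \<longleftrightarrow> of_int m * T \<le> z - s \<and> z - s < of_int m * T + T" for z m
  proof -
    have "\<lfloor>(z - s) / T\<rfloor> = m \<longleftrightarrow> of_int m \<le> (z - s) / T \<and> (z - s) / T < of_int m + 1"
      by (simp add: floor_eq_iff)
    also have "\<dots> \<longleftrightarrow> of_int m * T \<le> z - s \<and> z - s < of_int m * T + T" using T
      by (simp add: le_divide_eq divide_less_eq algebra_simps)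
    finally show ?thesis .
  qed
  have cform: "dbf_c T CL CH D DL t z =
     of_int \<lfloor>(z - s) / T\<rfloor> * CL + dbf_job CL CH D DL (s + of_int \<lfloor>(z - s) / T\<rfloor> * T) t z
      + of_int (n - \<lfloor>(z - s) / T\<rfloor>) * CH" for z
    unfolding dbf_c_def Let_def s_def n_def by simp
  have bC: "\<lfloor>(z - s) / T\<rfloor> \<le> n" if "D \<le> t - z" for z
  proof -
    have "(z - s) / T \<le> of_int n" using that T by (simp add: divide_le_eq s_def)
    then show ?thesis by (simp add: floor_le_iff)
  qed
  have cC: "dbf_c T CL CH D DL t z = (of_int n + 1) * CH
      - (CH - CL) * (of_int \<lfloor>(z - s) / T\<rfloor> + (if z > s + of_int \<lfloor>(z - s) / T\<rfloor> * T + DL then 1 else 0))"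
    if "D \<le> t - z" for z
  proof -
    define b where "b = \<lfloor>(z - s) / T\<rfloor>"
    have "b \<le> n" using bC[OF that] b_def by simp
    then have "of_int b * T \<le> of_int n * T" using T by simp
    then have "s + of_int b * T + D \<le> t" unfolding s_def by simp
    then have j: "dbf_job CL CH D DL (s + of_int b * T) t z = (if z > s + of_int b * T + DL then CL else CH)"
      unfolding dbf_job_def by auto
    show ?thesis unfolding cform b_def[symmetric] j
      by (simp add: algebra_simps of_int_diff)
  qed
  {
    assume a: "y < t" "D - DL \<le> t - y" "t - y < D"
    have "\<lfloor>(y - s) / T\<rfloor> = n" unfolding bfl using a T unfolding s_def by auto
    then show "dbf_c T CL CH D DL t y = of_int n * CL + CH"
      unfolding cform dbf_job_def using a unfolding s_def by auto
  }
  {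
    assume a: "D \<le> t - x"
    define b where "b = \<lfloor>(x - s) / T\<rfloor>"
    have bn: "b \<le> n" using bC[OF a] b_def by simp
    show "of_int n * CL + CH \<le> dbf_c T CL CH D DL t x"
    proof (cases "b = n")
      case True
      then have "\<not> x > s + of_int b * T + DL" using a T unfolding s_def by auto
      then show ?thesis unfolding cC[OF a] b_def[symmetric] using True by (simp add: algebra_simps)
    next
      case False
      then have "of_int b + 1 \<le> (of_int n :: real)" using bn by linarith
      define ind where "ind = (if x > s + of_int b * T + DL then 1 else (0::real))"
      have "of_int b + ind \<le> of_int n" using \<open>of_int b + 1 \<le> (of_int n :: real)\<close> ind_def by auto
      then have "(CH - CL) * (of_int b + ind) \<le> (CH - CL) * of_int n" using T by (simp add: mult_left_mono)
      moreover have "(of_int n + 1) * CH - (CH - CL) * of_int n = of_int n * CL + CH" by (simp add: algebra_simps)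
      ultimately show ?thesis unfolding cC[OF a] b_def[symmetric] ind_def[symmetric] by linarith
    qed
  }
  {
    assume a: "x \<le> y" "D \<le> t - y"
    then have a2: "D \<le> t - x" by simp
    define bx where "bx = \<lfloor>(x - s) / T\<rfloor>"
    define by' where "by' = \<lfloor>(y - s) / T\<rfloor>"
    have le: "bx \<le> by'" unfolding bx_def by'_def using a T by (simp add: floor_mono divide_right_mono)
    have "of_int bx + (if x > s + of_int bx * T + DL then 1 else 0)
        \<le> of_int by' + (if y > s + of_int by' * T + DL then (1::real) else 0)"
    proof (cases "bx < by'")
      case True then show ?thesis by auto
    next
      case False then have "bx = by'" using le by auto
      then show ?thesis using a by auto
    qed
    then have "(CH - CL) * (of_int bx + (if x > s + of_int bx * T + DL then 1 else 0))
        \<le> (CH - CL) * (of_int by' + (if y > s + of_int by' * T + DL then (1::real) else 0))"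
      using T by (intro mult_left_mono) auto
    then show "dbf_c T CL CH D DL t y \<le> dbf_c T CL CH D DL t x"
      unfolding cC[OF a(2)] cC[OF a2] bx_def[symmetric] by'_def[symmetric] by linarith
  }
qed

theorem lemma5:
  fixes T CL CH D DL t tI tE ti :: real
  assumes "hc_task T CL CH D DL"
    and "0 \<le> tI" and "tI \<le> tE" and "tE \<le> t"
    and "tI \<le> ti" and "ti \<le> tE"
  shows "dbf T CL CH D DL t ti \<le> max (dbf T CL CH D DL t tI) (dbf T CL CH D DL t tE)"
proof (cases "ti = tE")
  case True then show ?thesis by simp
next
  case False
  note h = assms(1)
  have T: "0 < T" "0 < CL" "CL < CH" "DL \<le> D" "D \<le> T" "0 < DL" using h unfolding hc_task_def by auto
  have lt: "ti < tE" "ti < t" "tI < t" using False assms by auto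
  define c0 where "c0 = of_int \<lfloor>(t - D) / T\<rfloor> * CL + CH"
  show ?thesis
  proof (cases "D \<le> t - ti")
    case True
    then have "D \<le> t - tI" using assms by simp
    have "dbf T CL CH D DL t ti = dbf_c T CL CH D DL t ti" using True T unfolding dbf_def by auto
    also have "\<dots> \<le> dbf_c T CL CH D DL t tI" using True c_facts(3)[OF h, of tI ti] assms by auto
    also have "\<dots> \<le> dbf T CL CH D DL t tI" using \<open>D \<le> t - tI\<close> T unfolding dbf_def by auto
    finally show ?thesis by simp
  next
    case nC: False
    have gz: "gfun T CL D DL t ti \<le> dbf T CL CH D DL t tE"
    proof -
      have "gfun T CL D DL t ti \<le> gfun T CL D DL t tE" using g_mono[OF h] assms by simp
      also have "\<dots> \<le> dbf_b T CL CH D DL t tE" using b_ge_g[OF h] .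
      also have "\<dots> \<le> dbf T CL CH D DL t tE" using nC assms unfolding dbf_def by auto
      finally show ?thesis .
    qed
    show ?thesis
    proof (cases "t - ti < D - DL")
      case True
      then show ?thesis using gz b_eq_g_L[OF h True] unfolding dbf_def by auto
    next
      case M: False
      have fy: "dbf T CL CH D DL t ti \<le> max (gfun T CL D DL t ti) c0"
        using M nC c_facts(1)[OF h lt(2)] b_le_M[OF h, of t ti] unfolding dbf_def c0_def by auto
      have fx: "c0 \<le> dbf T CL CH D DL t tI"
      proof (cases "D \<le> t - tI")
        case True then show ?thesis using c_facts(2)[OF h True] T unfolding dbf_def c0_def by auto
      next
        case False
        have "D - DL \<le> t - tI" using M assms by simp
        then show ?thesis using False c_facts(1)[OF h lt(3)] unfolding dbf_def c0_def by auto
      qed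
      show ?thesis using fy fx gz by auto
    qed
  qed
qed

end
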